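(* Let $R$ be a commutative ring with identity and $M$ a non-zero comultiplication $R$-module such that $G'(M)$ is non-null. Then $G'(M)$ is an empty graph (has no edges) if and only if $\mathrm{Min}(M)=\{S_1,S_2\}$ with $S_1\neq S_2$ and both $M/S_1$ and $M/S_2$ are finitely cogenerated uniform $R$-modules.
   Context: An $R$-module $M$ is a comultiplication module if for every submodule $N$ of $M$ there is an ideal $I$ of $R$ with $N=\mathrm{Ann}_M(I)$. A submodule $N$ of $M$ is large if $N\cap L\neq 0$ for every non-zero submodule $L$ of $M$. $\mathrm{Min}(M)$ is the set of minimal submodules of $M$. The large sum graph $G'(M)$ has as vertex set the set of all non-zero non-large submodules of $M$, and two distinct vertices $N,K$ are adjacent iff $N+K$ is non-large in $M$. A module is uniform if any two non-zero submodules have non-zero intersection; a module $X$ is finitely cogenerated if whenever a family of submodules of $X$ has zero intersection, some finite subfamily has zero intersection. *)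

theory Defs
  imports "HOL-Algebra.Module" "HOL-Algebra.AbelCoset" "HOL-Algebra.Ideal"
begin

definition submods :: "('a, 'c) ring_scheme \<Rightarrow> ('a, 'b, 'd) module_scheme \<Rightarrow> 'b set set" where
  "submods R M = {N. submodule N R M}"

definition AnnM :: "('a, 'b, 'd) module_scheme \<Rightarrow> 'a set \<Rightarrow> 'b set" where
  "AnnM M I = {m \<in> carrier M. \<forall>r\<in>I. r \<odot>\<^bsub>M\<^esub> m = \<zero>\<^bsub>M\<^esub>}"

definition comultiplication_module :: "('a, 'c) ring_scheme \<Rightarrow> ('a, 'b, 'd) module_scheme \<Rightarrow> bool" where
  "comultiplication_module R M \<longleftrightarrow>
     (\<forall>N. submodule N R M \<longrightarrow> (\<exists>I. ideal I R \<and> N = AnnM M I))"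

definition large_submodule :: "('a, 'c) ring_scheme \<Rightarrow> ('a, 'b, 'd) module_scheme \<Rightarrow> 'b set \<Rightarrow> bool" where
  "large_submodule R M N \<longleftrightarrow> submodule N R M \<and>
     (\<forall>L. submodule L R M \<and> L \<noteq> {\<zero>\<^bsub>M\<^esub>} \<longrightarrow> N \<inter> L \<noteq> {\<zero>\<^bsub>M\<^esub>})"

definition MinSub :: "('a, 'c) ring_scheme \<Rightarrow> ('a, 'b, 'd) module_scheme \<Rightarrow> 'b set set" where
  "MinSub R M = {N. submodule N R M \<and> N \<noteq> {\<zero>\<^bsub>M\<^esub>} \<and>
     (\<forall>K. submodule K R M \<and> K \<subseteq> N \<and> K \<noteq> {\<zero>\<^bsub>M\<^esub>} \<longrightarrow> K = N)}"

definition LSG_vertices :: "('a, 'c) ring_scheme \<Rightarrow> ('a, 'b, 'd) module_scheme \<Rightarrow> 'b set set" where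
  "LSG_vertices R M = {N. submodule N R M \<and> N \<noteq> {\<zero>\<^bsub>M\<^esub>} \<and> \<not> large_submodule R M N}"

definition LSG_adj :: "('a, 'c) ring_scheme \<Rightarrow> ('a, 'b, 'd) module_scheme \<Rightarrow> 'b set \<Rightarrow> 'b set \<Rightarrow> bool" where
  "LSG_adj R M N K \<longleftrightarrow> N \<in> LSG_vertices R M \<and> K \<in> LSG_vertices R M \<and> N \<noteq> K \<and>
     \<not> large_submodule R M (N <+>\<^bsub>M\<^esub> K)"

definition LSG_nonnull :: "('a, 'c) ring_scheme \<Rightarrow> ('a, 'b, 'd) module_scheme \<Rightarrow> bool" where
  "LSG_nonnull R M \<longleftrightarrow> LSG_vertices R M \<noteq> {}"

definition LSG_empty :: "('a, 'c) ring_scheme \<Rightarrow> ('a, 'b, 'd) module_scheme \<Rightarrow> bool" where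
  "LSG_empty R M \<longleftrightarrow> (\<forall>N K. \<not> LSG_adj R M N K)"

definition quot_module :: "('a, 'c) ring_scheme \<Rightarrow> ('a, 'b, 'd) module_scheme \<Rightarrow> 'b set \<Rightarrow> ('a, 'b set) module" where
  "quot_module R M S =
     \<lparr> carrier = a_rcosets\<^bsub>M\<^esub> S,
       mult = (\<lambda>X Y. S),
       one = S,
       zero = S,
       add = (\<lambda>X Y. X <+>\<^bsub>M\<^esub> Y),
       smult = (\<lambda>r X. ((\<lambda>x. r \<odot>\<^bsub>M\<^esub> x) ` X) <+>\<^bsub>M\<^esub> S) \<rparr>"

definition uniform_module :: "('a, 'c) ring_scheme \<Rightarrow> ('a, 'b, 'd) module_scheme \<Rightarrow> bool" where
  "uniform_module R X \<longleftrightarrow>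
     (\<forall>A B. submodule A R X \<and> submodule B R X \<and> A \<noteq> {\<zero>\<^bsub>X\<^esub>} \<and> B \<noteq> {\<zero>\<^bsub>X\<^esub>}
        \<longrightarrow> A \<inter> B \<noteq> {\<zero>\<^bsub>X\<^esub>})"

(* finitely cogenerated module: every family of submodules with zero intersection
   has a finite subfamily with zero intersection (intersections taken inside carrier X,
   so the empty subfamily has intersection X) *)
definition finitely_cogenerated :: "('a, 'c) ring_scheme \<Rightarrow> ('a, 'b, 'd) module_scheme \<Rightarrow> bool" where
  "finitely_cogenerated R X \<longleftrightarrow>
     (\<forall>F. F \<subseteq> submods R X \<and> carrier X \<inter> \<Inter>F = {\<zero>\<^bsub>X\<^esub>} \<longrightarrow>
        (\<exists>F0. F0 \<subseteq> F \<and> finite F0 \<and> carrier X \<inter> \<Inter>F0 = {\<zero>\<^bsub>X\<^esub>}))"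

end

theory Submission
  imports Defs
begin
no_notation Sum_Type.Plus (infixr "<+>" 65)


context module begin

lemma submod_abelian: "submodule S R M \<Longrightarrow> abelian_subgroup S M"
  by (meson abelian_group_axioms abelian_subgroupI3 additive_subgroup.intro submodule.axioms(1))

lemma submod_sub: "submodule S R M \<Longrightarrow> subgroup S (add_monoid M)"
  by (simp add: submodule.axioms(1))

lemma quot_simps:
  "carrier (quot_module R M S) = a_rcosets\<^bsub>M\<^esub> S"
  "\<zero>\<^bsub>quot_module R M S\<^esub> = S"
  "X \<oplus>\<^bsub>quot_module R M S\<^esub> Y = X <+>\<^bsub>M\<^esub> Y"
  "r \<odot>\<^bsub>quot_module R M S\<^esub> X = ((\<lambda>x. r \<odot>\<^bsub>M\<^esub> x) ` X) <+>\<^bsub>M\<^esub> S"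
  "carrier (add_monoid (quot_module R M S)) = a_rcosets\<^bsub>M\<^esub> S"
  "one (add_monoid (quot_module R M S)) = S"
  "mult (add_monoid (quot_module R M S)) X Y = X <+>\<^bsub>M\<^esub> Y"
  by (simp_all add: quot_module_def)

lemma coset_self_iff: assumes S: "submodule S R M" and x: "x \<in> carrier M"
  shows "(S +>\<^bsub>M\<^esub> x = S) = (x \<in> S)"
proof
  assume "S +>\<^bsub>M\<^esub> x = S" then show "x \<in> S" using a_coset_join1[OF _ x submod_sub[OF S]] by simp
next
  assume "x \<in> S" then show "S +>\<^bsub>M\<^esub> x = S" using a_coset_join2[OF x submod_sub[OF S]] by simp
qed

lemma coset_eqD: assumes S: "submodule S R M" and x: "x \<in> carrier M" and e: "S +>\<^bsub>M\<^esub> x = S +>\<^bsub>M\<^esub> y"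
  shows "\<exists>t\<in>S. x = t \<oplus>\<^bsub>M\<^esub> y"
proof -
  have "x \<in> S +>\<^bsub>M\<^esub> y" using abelian_subgroup.a_rcos_self[OF submod_abelian[OF S] x] e by simp
  then show ?thesis unfolding a_r_coset_def' by blast
qed

lemma quot_add: assumes S: "submodule S R M" and x: "x \<in> carrier M" and y: "y \<in> carrier M"
  shows "(S +>\<^bsub>M\<^esub> x) <+>\<^bsub>M\<^esub> (S +>\<^bsub>M\<^esub> y) = S +>\<^bsub>M\<^esub> (x \<oplus>\<^bsub>M\<^esub> y)"
  using abelian_subgroup.a_rcos_sum[OF submod_abelian[OF S] x y] .

lemma quot_smult: assumes S: "submodule S R M" and r: "r \<in> carrier R" and x: "x \<in> carrier M"
  shows "((\<lambda>x. r \<odot>\<^bsub>M\<^esub> x) ` (S +>\<^bsub>M\<^esub> x)) <+>\<^bsub>M\<^esub> S = S +>\<^bsub>M\<^esub> (r \<odot>\<^bsub>M\<^esub> x)"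
proof -
  have Ssub: "S \<subseteq> carrier M" using S submoduleE(1) by blast
  have z: "\<zero>\<^bsub>M\<^esub> \<in> S" using S by (meson additive_subgroup.zero_closed additive_subgroup.intro submod_sub)
  show ?thesis
  proof
    show "(\<lambda>x. r \<odot>\<^bsub>M\<^esub> x) ` (S +>\<^bsub>M\<^esub> x) <+>\<^bsub>M\<^esub> S \<subseteq> S +>\<^bsub>M\<^esub> r \<odot>\<^bsub>M\<^esub> x"
    proof
      fix z assume "z \<in> (\<lambda>x. r \<odot>\<^bsub>M\<^esub> x) ` (S +>\<^bsub>M\<^esub> x) <+>\<^bsub>M\<^esub> S"
      then obtain s t where st: "s \<in> S" "t \<in> S" "z = r \<odot>\<^bsub>M\<^esub> (s \<oplus>\<^bsub>M\<^esub> x) \<oplus>\<^bsub>M\<^esub> t"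
        by (auto simp: set_add_def' a_r_coset_def')
      have "z = (r \<odot>\<^bsub>M\<^esub> s \<oplus>\<^bsub>M\<^esub> t) \<oplus>\<^bsub>M\<^esub> r \<odot>\<^bsub>M\<^esub> x" using st Ssub r x
        by (simp add: smult_r_distr subsetD a_ac)
      moreover have "r \<odot>\<^bsub>M\<^esub> s \<oplus>\<^bsub>M\<^esub> t \<in> S" using st S
        by (meson additive_subgroup.a_closed additive_subgroup.intro submod_sub submodule.smult_closed r)
      ultimately show "z \<in> S +>\<^bsub>M\<^esub> r \<odot>\<^bsub>M\<^esub> x" by (auto simp: a_r_coset_def')
    qed
  next
    show "S +>\<^bsub>M\<^esub> r \<odot>\<^bsub>M\<^esub> x \<subseteq> (\<lambda>x. r \<odot>\<^bsub>M\<^esub> x) ` (S +>\<^bsub>M\<^esub> x) <+>\<^bsub>M\<^esub> S"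
    proof
      fix z assume "z \<in> S +>\<^bsub>M\<^esub> r \<odot>\<^bsub>M\<^esub> x"
      then obtain t where t: "t \<in> S" "z = t \<oplus>\<^bsub>M\<^esub> r \<odot>\<^bsub>M\<^esub> x" by (auto simp: a_r_coset_def')
      have "z = r \<odot>\<^bsub>M\<^esub> (\<zero>\<^bsub>M\<^esub> \<oplus>\<^bsub>M\<^esub> x) \<oplus>\<^bsub>M\<^esub> t" using t Ssub r x by (simp add: subsetD a_ac)
      moreover have mem: "r \<odot>\<^bsub>M\<^esub> (\<zero>\<^bsub>M\<^esub> \<oplus>\<^bsub>M\<^esub> x) \<in> (\<lambda>x. r \<odot>\<^bsub>M\<^esub> x) ` (S +>\<^bsub>M\<^esub> x)"
        using z unfolding a_r_coset_def' by blast
      moreover have "r \<odot>\<^bsub>M\<^esub> (\<zero>\<^bsub>M\<^esub> \<oplus>\<^bsub>M\<^esub> x) \<oplus>\<^bsub>M\<^esub> t \<in> (\<lambda>x. r \<odot>\<^bsub>M\<^esub> x) ` (S +>\<^bsub>M\<^esub> x) <+>\<^bsub>M\<^esub> S"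
        using mem t(1) unfolding set_add_def' by blast
      ultimately show "z \<in> (\<lambda>x. r \<odot>\<^bsub>M\<^esub> x) ` (S +>\<^bsub>M\<^esub> x) <+>\<^bsub>M\<^esub> S" by simp
    qed
  qed
qed


lemma quot_inv: "m_inv (add_monoid (quot_module R M S)) X = m_inv (M A_Mod S) X"
  by (simp add: m_inv_def quot_module_def A_FactGroup_def' set_add_def)

lemma quot_inv_coset: assumes S: "submodule S R M" and x: "x \<in> carrier M"
  shows "m_inv (add_monoid (quot_module R M S)) (S +>\<^bsub>M\<^esub> x) = S +>\<^bsub>M\<^esub> (\<ominus>\<^bsub>M\<^esub> x)"
proof -
  interpret A: abelian_subgroup S M using submod_abelian[OF S] .
  have "S +>\<^bsub>M\<^esub> x \<in> carrier (M A_Mod S)" using x A.a_subset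
    by (simp add: A_FactGroup_def' a_rcosetsI)
  then show ?thesis unfolding quot_inv using A.a_inv_FactGroup A.a_rcos_inv x by simp
qed

lemma submod_subset: "submodule S R M \<Longrightarrow> S \<subseteq> carrier M"
  using submoduleE(1) by blast

lemma submod_zero: "submodule S R M \<Longrightarrow> \<zero>\<^bsub>M\<^esub> \<in> S"
  by (meson additive_subgroup.zero_closed additive_subgroup.intro submod_sub)

lemma submod_add: "submodule S R M \<Longrightarrow> a \<in> S \<Longrightarrow> b \<in> S \<Longrightarrow> a \<oplus>\<^bsub>M\<^esub> b \<in> S"
  using submoduleE(5) by blast

lemma submod_neg: "submodule S R M \<Longrightarrow> a \<in> S \<Longrightarrow> \<ominus>\<^bsub>M\<^esub> a \<in> S"
  using submoduleE(3) by blast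

lemma submod_smult: "submodule S R M \<Longrightarrow> r \<in> carrier R \<Longrightarrow> a \<in> S \<Longrightarrow> r \<odot>\<^bsub>M\<^esub> a \<in> S"
  using submoduleE(4) by blast

lemma image_submod: assumes S: "submodule S R M" and A: "submodule A R M"
  shows "submodule ((\<lambda>a. S +>\<^bsub>M\<^esub> a) ` A) R (quot_module R M S)"
proof (intro submodule.intro subgroup.intro submodule_axioms.intro)
  have As: "A \<subseteq> carrier M" using A submod_subset by blast
  have Ss: "S \<subseteq> carrier M" using S submod_subset by blast
  show "(\<lambda>a. S +>\<^bsub>M\<^esub> a) ` A \<subseteq> carrier (add_monoid (quot_module R M S))"
    using As Ss by (auto simp: quot_simps intro!: a_rcosetsI)
  show "x \<otimes>\<^bsub>add_monoid (quot_module R M S)\<^esub> y \<in> (\<lambda>a. S +>\<^bsub>M\<^esub> a) ` A"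
    if xy: "x \<in> (\<lambda>a. S +>\<^bsub>M\<^esub> a) ` A" "y \<in> (\<lambda>a. S +>\<^bsub>M\<^esub> a) ` A" for x y
  proof -
    obtain a b where "a \<in> A" "b \<in> A" "x = S +>\<^bsub>M\<^esub> a" "y = S +>\<^bsub>M\<^esub> b" using xy by blast
    note ab = this
    then have "S +>\<^bsub>M\<^esub> a <+>\<^bsub>M\<^esub> (S +>\<^bsub>M\<^esub> b) = S +>\<^bsub>M\<^esub> (a \<oplus>\<^bsub>M\<^esub> b)"
      using As quot_add[OF S] by blast
    then show ?thesis using ab submod_add[OF A] by (simp add: quot_simps)
  qed
  show "\<one>\<^bsub>add_monoid (quot_module R M S)\<^esub> \<in> (\<lambda>a. S +>\<^bsub>M\<^esub> a) ` A"
    using submod_zero[OF A] a_coset_add_zero[OF Ss] by (force simp: quot_simps)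
  show "inv\<^bsub>add_monoid (quot_module R M S)\<^esub> x \<in> (\<lambda>a. S +>\<^bsub>M\<^esub> a) ` A"
    if "x \<in> (\<lambda>a. S +>\<^bsub>M\<^esub> a) ` A" for x
    using that As quot_inv_coset[OF S] submod_neg[OF A] by auto
  show "a \<odot>\<^bsub>quot_module R M S\<^esub> x \<in> (\<lambda>a. S +>\<^bsub>M\<^esub> a) ` A"
    if "a \<in> carrier R" "x \<in> (\<lambda>a. S +>\<^bsub>M\<^esub> a) ` A" for a x
    using that As quot_smult[OF S] submod_smult[OF A] by (auto simp: quot_simps)
qed

lemma pullback_submod: assumes S: "submodule S R M" and U: "submodule U R (quot_module R M S)"
  shows "submodule {x \<in> carrier M. S +>\<^bsub>M\<^esub> x \<in> U} R M"
proof (rule submoduleI)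
  have Ss: "S \<subseteq> carrier M" using S submod_subset by blast
  interpret U: submodule U R "quot_module R M S" by (rule U)
  have add: "S +>\<^bsub>M\<^esub> x <+>\<^bsub>M\<^esub> (S +>\<^bsub>M\<^esub> y) \<in> U" if "S +>\<^bsub>M\<^esub> x \<in> U" "S +>\<^bsub>M\<^esub> y \<in> U" for x y
    using U.m_closed[OF that] by (simp add: quot_simps)
  have sm: "(\<lambda>z. r \<odot>\<^bsub>M\<^esub> z) ` X <+>\<^bsub>M\<^esub> S \<in> U" if "r \<in> carrier R" "X \<in> U" for r X
    using U.smult_closed[OF that] by (simp add: quot_simps)
  show "{x \<in> carrier M. S +>\<^bsub>M\<^esub> x \<in> U} \<subseteq> carrier M" by blast
  show "\<zero>\<^bsub>M\<^esub> \<in> {x \<in> carrier M. S +>\<^bsub>M\<^esub> x \<in> U}"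
    using U.one_closed a_coset_add_zero[OF Ss] by (simp add: quot_simps)
  show "a \<oplus>\<^bsub>M\<^esub> b \<in> {x \<in> carrier M. S +>\<^bsub>M\<^esub> x \<in> U}"
    if "a \<in> {x \<in> carrier M. S +>\<^bsub>M\<^esub> x \<in> U}" "b \<in> {x \<in> carrier M. S +>\<^bsub>M\<^esub> x \<in> U}" for a b
  proof -
    have a: "a \<in> carrier M" "S +>\<^bsub>M\<^esub> a \<in> U" and b: "b \<in> carrier M" "S +>\<^bsub>M\<^esub> b \<in> U" using that by auto
    have "S +>\<^bsub>M\<^esub> (a \<oplus>\<^bsub>M\<^esub> b) \<in> U" using add[OF a(2) b(2)] quot_add[OF S a(1) b(1)] by simp
    then show ?thesis using a b by simp
  qed
  have smc: "S +>\<^bsub>M\<^esub> (r \<odot>\<^bsub>M\<^esub> x) \<in> U" if r: "r \<in> carrier R" and x: "x \<in> carrier M" "S +>\<^bsub>M\<^esub> x \<in> U" for r x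
  proof -
    have "(\<lambda>z. r \<odot>\<^bsub>M\<^esub> z) ` (S +>\<^bsub>M\<^esub> x) <+>\<^bsub>M\<^esub> S \<in> U" using sm[OF r x(2)] .
    then show ?thesis using quot_smult[OF S r x(1)] by simp
  qed
  show "r \<odot>\<^bsub>M\<^esub> x \<in> {x \<in> carrier M. S +>\<^bsub>M\<^esub> x \<in> U}"
    if rx: "r \<in> carrier R" "x \<in> {x \<in> carrier M. S +>\<^bsub>M\<^esub> x \<in> U}" for r x
  proof -
    have x: "x \<in> carrier M" "S +>\<^bsub>M\<^esub> x \<in> U" using rx(2) by auto
    show ?thesis using smc[OF rx(1) x] rx(1) x(1) by simp
  qed
  show "\<ominus>\<^bsub>M\<^esub> x \<in> {x \<in> carrier M. S +>\<^bsub>M\<^esub> x \<in> U}"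
    if xx: "x \<in> {x \<in> carrier M. S +>\<^bsub>M\<^esub> x \<in> U}" for x
  proof -
    have x: "x \<in> carrier M" "S +>\<^bsub>M\<^esub> x \<in> U" using xx by auto
    have m1: "\<ominus> \<one> \<in> carrier R" by simp
    have "(\<ominus> \<one>) \<odot>\<^bsub>M\<^esub> x = \<ominus>\<^bsub>M\<^esub> x" using smult_l_minus[of \<one> x] x(1) by simp
    then show ?thesis using smc[OF m1 x] x(1) by simp
  qed
qed

lemma inter_submod: "submodule A R M \<Longrightarrow> submodule B R M \<Longrightarrow> submodule (A \<inter> B) R M"
  by (rule submoduleI) (auto dest: submod_subset intro: submod_zero submod_add submod_neg submod_smult)

lemma sum_submod: assumes A: "submodule A R M" and B: "submodule B R M"
  shows "submodule (A <+>\<^bsub>M\<^esub> B) R M"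
proof (rule submoduleI)
  have As: "A \<subseteq> carrier M" and Bs: "B \<subseteq> carrier M" using A B submod_subset by auto
  show "A <+>\<^bsub>M\<^esub> B \<subseteq> carrier M" using As Bs by (rule setadd_subset_G)
  show "\<zero>\<^bsub>M\<^esub> \<in> A <+>\<^bsub>M\<^esub> B" unfolding set_add_def'
    using submod_zero[OF A] submod_zero[OF B] by force
  show "\<ominus>\<^bsub>M\<^esub> x \<in> A <+>\<^bsub>M\<^esub> B" if xx: "x \<in> A <+>\<^bsub>M\<^esub> B" for x
  proof -
    obtain a b where ab: "a \<in> A" "b \<in> B" "x = a \<oplus>\<^bsub>M\<^esub> b" using xx unfolding set_add_def' by blast
    have "\<ominus>\<^bsub>M\<^esub> x = (\<ominus>\<^bsub>M\<^esub> a) \<oplus>\<^bsub>M\<^esub> (\<ominus>\<^bsub>M\<^esub> b)"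
      using ab As Bs by (simp add: subsetD minus_add)
    moreover have "\<ominus>\<^bsub>M\<^esub> a \<in> A" "\<ominus>\<^bsub>M\<^esub> b \<in> B" using ab submod_neg[OF A] submod_neg[OF B] by auto
    ultimately show ?thesis unfolding set_add_def' by blast
  qed
  show "x \<oplus>\<^bsub>M\<^esub> y \<in> A <+>\<^bsub>M\<^esub> B" if xy: "x \<in> A <+>\<^bsub>M\<^esub> B" "y \<in> A <+>\<^bsub>M\<^esub> B" for x y
  proof -
    obtain a b where ab: "a \<in> A" "b \<in> B" "x = a \<oplus>\<^bsub>M\<^esub> b" using xy unfolding set_add_def' by blast
    obtain a' b' where ab': "a' \<in> A" "b' \<in> B" "y = a' \<oplus>\<^bsub>M\<^esub> b'" using xy unfolding set_add_def' by blast
    have "x \<oplus>\<^bsub>M\<^esub> y = (a \<oplus>\<^bsub>M\<^esub> a') \<oplus>\<^bsub>M\<^esub> (b \<oplus>\<^bsub>M\<^esub> b')"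
      using ab ab' As Bs by (simp add: subsetD a_ac)
    moreover have "a \<oplus>\<^bsub>M\<^esub> a' \<in> A" "b \<oplus>\<^bsub>M\<^esub> b' \<in> B" using ab ab' submod_add[OF A] submod_add[OF B] by auto
    ultimately show ?thesis unfolding set_add_def' by blast
  qed
  show "r \<odot>\<^bsub>M\<^esub> x \<in> A <+>\<^bsub>M\<^esub> B" if rx: "r \<in> carrier R" "x \<in> A <+>\<^bsub>M\<^esub> B" for r x
  proof -
    obtain a b where ab: "a \<in> A" "b \<in> B" "x = a \<oplus>\<^bsub>M\<^esub> b" using rx unfolding set_add_def' by blast
    have "r \<odot>\<^bsub>M\<^esub> x = (r \<odot>\<^bsub>M\<^esub> a) \<oplus>\<^bsub>M\<^esub> (r \<odot>\<^bsub>M\<^esub> b)"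
      using ab As Bs rx by (simp add: subsetD smult_r_distr)
    moreover have "r \<odot>\<^bsub>M\<^esub> a \<in> A" "r \<odot>\<^bsub>M\<^esub> b \<in> B" using ab rx submod_smult[OF A] submod_smult[OF B] by auto
    ultimately show ?thesis unfolding set_add_def' by blast
  qed
qed


lemma nz_elem: "submodule P R M \<Longrightarrow> P \<noteq> {\<zero>\<^bsub>M\<^esub>} \<Longrightarrow> \<exists>x\<in>P. x \<noteq> \<zero>\<^bsub>M\<^esub>"
  using submod_zero by blast

lemma min_meet: assumes S: "S \<in> MinSub R M" and P: "submodule P R M" and ne: "P \<inter> S \<noteq> {\<zero>\<^bsub>M\<^esub>}"
  shows "S \<subseteq> P"
proof -
  have "submodule S R M" using S by (simp add: MinSub_def)
  then have "submodule (P \<inter> S) R M" using P inter_submod by blast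
  then have "P \<inter> S = S" using S ne by (auto simp: MinSub_def)
  then show ?thesis by blast
qed

lemma min_disj: assumes "S1 \<in> MinSub R M" "S2 \<in> MinSub R M" "S1 \<noteq> S2"
  shows "S1 \<inter> S2 = {\<zero>\<^bsub>M\<^esub>}"
proof (rule ccontr)
  assume h: "S1 \<inter> S2 \<noteq> {\<zero>\<^bsub>M\<^esub>}"
  have s: "submodule S1 R M" "submodule S2 R M" using assms by (auto simp: MinSub_def)
  have "S1 \<subseteq> S2" using min_meet[OF assms(1) s(2)] h by (simp add: Int_commute)
  moreover have "S2 \<subseteq> S1" using min_meet[OF assms(2) s(1)] h by simp
  ultimately show False using assms(3) by blast
qed

lemma comult_key:
  assumes cm: "comultiplication_module R M" and P: "submodule P R M"
    and S1: "submodule S1 R M" and S2: "submodule S2 R M" and dj: "S1 \<inter> S2 = {\<zero>\<^bsub>M\<^esub>}"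
    and t: "t \<in> S1" and s: "s \<in> S2" and ts: "t \<oplus>\<^bsub>M\<^esub> s \<in> P"
  shows "t \<in> P"
proof -
  obtain I where I: "ideal I R" "P = AnnM M I" using cm P by (auto simp: comultiplication_module_def)
  have Ic: "I \<subseteq> carrier R" using I(1) by (simp add: ideal_def additive_subgroup.a_subset)
  have tc: "t \<in> carrier M" and sc: "s \<in> carrier M" using t s S1 S2 submod_subset by auto
  have "r \<odot>\<^bsub>M\<^esub> t = \<zero>\<^bsub>M\<^esub>" if r: "r \<in> I" for r
  proof -
    have rc: "r \<in> carrier R" using r Ic by blast
    have "r \<odot>\<^bsub>M\<^esub> (t \<oplus>\<^bsub>M\<^esub> s) = \<zero>\<^bsub>M\<^esub>" using ts I(2) r by (auto simp: AnnM_def)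
    then have e: "r \<odot>\<^bsub>M\<^esub> t \<oplus>\<^bsub>M\<^esub> r \<odot>\<^bsub>M\<^esub> s = \<zero>\<^bsub>M\<^esub>" using rc tc sc by (simp add: smult_r_distr)
    have "r \<odot>\<^bsub>M\<^esub> t = \<ominus>\<^bsub>M\<^esub> (r \<odot>\<^bsub>M\<^esub> s)" using e rc tc sc
      by (simp add: M.add.inv_equality[symmetric] a_comm)
    moreover have "r \<odot>\<^bsub>M\<^esub> t \<in> S1" using submod_smult[OF S1 rc t] .
    moreover have "\<ominus>\<^bsub>M\<^esub> (r \<odot>\<^bsub>M\<^esub> s) \<in> S2" using submod_neg[OF S2 submod_smult[OF S2 rc s]] .
    ultimately have "r \<odot>\<^bsub>M\<^esub> t \<in> S1 \<inter> S2" by simp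
    then show ?thesis using dj by simp
  qed
  then show ?thesis using I(2) tc by (simp add: AnnM_def)
qed

lemma large_mono: assumes A: "large_submodule R M A" and B: "submodule B R M" and AB: "A \<subseteq> B"
  shows "large_submodule R M B"
proof -
  have "B \<inter> L \<noteq> {\<zero>\<^bsub>M\<^esub>}" if L: "submodule L R M" "L \<noteq> {\<zero>\<^bsub>M\<^esub>}" for L
  proof
    assume h: "B \<inter> L = {\<zero>\<^bsub>M\<^esub>}"
    have A1: "submodule A R M" and A2: "\<forall>L. submodule L R M \<and> L \<noteq> {\<zero>\<^bsub>M\<^esub>} \<longrightarrow> A \<inter> L \<noteq> {\<zero>\<^bsub>M\<^esub>}"
      using A unfolding large_submodule_def by auto
    have "A \<inter> L \<noteq> {\<zero>\<^bsub>M\<^esub>}" using A2 L by simp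
    moreover have "\<zero>\<^bsub>M\<^esub> \<in> A \<inter> L" using submod_zero[OF A1] submod_zero[OF L(1)] by simp
    ultimately obtain x where x: "x \<in> A \<inter> L" "x \<noteq> \<zero>\<^bsub>M\<^esub>" by blast
    then have "x \<in> B \<inter> L" using AB by auto
    then show False using h x(2) by simp
  qed
  then show ?thesis using B unfolding large_submodule_def by simp
qed

lemma sum_sup1: assumes A: "submodule A R M" and B: "submodule B R M" shows "A \<subseteq> A <+>\<^bsub>M\<^esub> B"
proof
  fix a assume a: "a \<in> A"
  then have "a = a \<oplus>\<^bsub>M\<^esub> \<zero>\<^bsub>M\<^esub>" using submod_subset[OF A] by auto
  moreover have "a \<oplus>\<^bsub>M\<^esub> \<zero>\<^bsub>M\<^esub> \<in> A <+>\<^bsub>M\<^esub> B" unfolding set_add_def' using a submod_zero[OF B] by blast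
  ultimately show "a \<in> A <+>\<^bsub>M\<^esub> B" by simp
qed

lemma sum_comm1: assumes A: "submodule A R M" and B: "submodule B R M" and x: "x \<in> A <+>\<^bsub>M\<^esub> B"
  shows "x \<in> B <+>\<^bsub>M\<^esub> A"
proof -
  obtain a b where ab: "a \<in> A" "b \<in> B" "x = a \<oplus>\<^bsub>M\<^esub> b" using x unfolding set_add_def' by blast
  have "x = b \<oplus>\<^bsub>M\<^esub> a" using ab submod_subset[OF A] submod_subset[OF B] a_comm by (metis subsetD)
  then show ?thesis unfolding set_add_def' using ab by blast
qed

lemma sum_comm: "submodule A R M \<Longrightarrow> submodule B R M \<Longrightarrow> A <+>\<^bsub>M\<^esub> B = B <+>\<^bsub>M\<^esub> A"
  using sum_comm1 by blast


lemma sum_le: assumes V: "submodule V R M" and "A \<subseteq> V" "B \<subseteq> V" shows "A <+>\<^bsub>M\<^esub> B \<subseteq> V"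
proof
  fix x assume "x \<in> A <+>\<^bsub>M\<^esub> B"
  then obtain a b where ab: "a \<in> A" "b \<in> B" "x = a \<oplus>\<^bsub>M\<^esub> b" unfolding set_add_def' by blast
  have "a \<in> V" "b \<in> V" using ab assms by auto
  then show "x \<in> V" using submod_add[OF V] ab(3) by simp
qed

lemma sum_absorb: assumes K: "submodule K R M" and V: "submodule V R M" and KV: "K \<subseteq> V"
  shows "K <+>\<^bsub>M\<^esub> V = V"
proof
  show "K <+>\<^bsub>M\<^esub> V \<subseteq> V" using sum_le[OF V KV] by simp
  show "V \<subseteq> K <+>\<^bsub>M\<^esub> V" using sum_sup1[OF V K] sum_comm[OF K V] by simp
qed

lemma vertex_min: assumes E: "LSG_empty R M" and V: "V \<in> LSG_vertices R M"
  shows "V \<in> MinSub R M"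
proof -
  have Vs: "submodule V R M" "V \<noteq> {\<zero>\<^bsub>M\<^esub>}" "\<not> large_submodule R M V" using V by (auto simp: LSG_vertices_def)
  have "K = V" if K: "submodule K R M" "K \<subseteq> V" "K \<noteq> {\<zero>\<^bsub>M\<^esub>}" for K
  proof (rule ccontr)
    assume ne: "K \<noteq> V"
    have "\<not> large_submodule R M K" using large_mono[OF _ Vs(1) K(2)] Vs(3) by blast
    then have Kv: "K \<in> LSG_vertices R M" using K by (simp add: LSG_vertices_def)
    have "K <+>\<^bsub>M\<^esub> V = V" using sum_absorb[OF K(1) Vs(1) K(2)] .
    then have "LSG_adj R M K V" using Kv V ne Vs(3) by (simp add: LSG_adj_def)
    then show False using E by (simp add: LSG_empty_def)
  qed
  then show ?thesis using Vs by (simp add: MinSub_def)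
qed

lemma key_quot:
  assumes S1: "S1 \<in> MinSub R M" and S2: "S2 \<in> MinSub R M" and ne: "S1 \<noteq> S2"
    and VM: "\<forall>V\<in>LSG_vertices R M. V \<in> MinSub R M"
    and l0: "l0 \<in> S2"
    and U: "submodule U R (quot_module R M S1)" and Unz: "U \<noteq> {S1}"
  shows "S1 +>\<^bsub>M\<^esub> l0 \<in> U"
proof -
  have S1s: "submodule S1 R M" "S1 \<noteq> {\<zero>\<^bsub>M\<^esub>}" using S1 by (auto simp: MinSub_def)
  have S2s: "submodule S2 R M" using S2 by (auto simp: MinSub_def)
  interpret U: submodule U R "quot_module R M S1" by (rule U)
  have Usub: "U \<subseteq> a_rcosets\<^bsub>M\<^esub> S1" using U.subset by (simp add: quot_simps)
  have S1U: "S1 \<in> U" using U.one_closed by (simp add: quot_simps)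
  obtain X where X: "X \<in> U" "X \<noteq> S1" using Unz S1U by blast
  then obtain a where a: "a \<in> carrier M" "X = S1 +>\<^bsub>M\<^esub> a" using Usub unfolding A_RCOSETS_def' by blast
  have anot: "a \<notin> S1" using coset_self_iff[OF S1s(1) a(1)] X(2) a(2) by simp
  define A where "A = {x \<in> carrier M. S1 +>\<^bsub>M\<^esub> x \<in> U}"
  have As: "submodule A R M" unfolding A_def using pullback_submod[OF S1s(1) U] .
  have S1A: "S1 \<subseteq> A"
  proof
    fix s assume s: "s \<in> S1"
    have sc: "s \<in> carrier M" using s submod_subset[OF S1s(1)] by blast
    have "S1 +>\<^bsub>M\<^esub> s = S1" using coset_self_iff[OF S1s(1) sc] s by simp
    then show "s \<in> A" using S1U sc by (simp add: A_def)
  qed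
  have aA: "a \<in> A" using a X(1) by (simp add: A_def)
  have Anz: "A \<noteq> {\<zero>\<^bsub>M\<^esub>}" using S1A S1s(2) submod_zero[OF S1s(1)] by blast
  have Alarge: "large_submodule R M A"
  proof (rule ccontr)
    assume "\<not> large_submodule R M A"
    then have "A \<in> LSG_vertices R M" using As Anz by (simp add: LSG_vertices_def)
    then have "A \<in> MinSub R M" using VM by blast
    then have "S1 = A" using S1A S1s unfolding MinSub_def by blast
    then show False using aA anot by simp
  qed
  have S2nz: "S2 \<noteq> {\<zero>\<^bsub>M\<^esub>}" using S2 by (simp add: MinSub_def)
  have "A \<inter> S2 \<noteq> {\<zero>\<^bsub>M\<^esub>}" using Alarge S2s S2nz unfolding large_submodule_def by blast
  then have "S2 \<subseteq> A" using min_meet[OF S2 As] by simp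
  then show ?thesis using l0 unfolding A_def by blast
qed

lemma quot_good:
  assumes S1: "S1 \<in> MinSub R M" and S2: "S2 \<in> MinSub R M" and ne: "S1 \<noteq> S2"
    and VM: "\<forall>V\<in>LSG_vertices R M. V \<in> MinSub R M"
  shows "uniform_module R (quot_module R M S1) \<and> finitely_cogenerated R (quot_module R M S1)"
proof -
  have S1s: "submodule S1 R M" using S1 by (auto simp: MinSub_def)
  have S2s: "submodule S2 R M" "S2 \<noteq> {\<zero>\<^bsub>M\<^esub>}" using S2 by (auto simp: MinSub_def)
  obtain l0 where l0: "l0 \<in> S2" "l0 \<noteq> \<zero>\<^bsub>M\<^esub>" using nz_elem[OF S2s] by blast
  have l0c: "l0 \<in> carrier M" using l0 submod_subset[OF S2s(1)] by blast
  have "l0 \<notin> S1" using min_disj[OF S1 S2 ne] l0 by blast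
  then have X0ne: "S1 +>\<^bsub>M\<^esub> l0 \<noteq> S1" using coset_self_iff[OF S1s l0c] by simp
  have X0c: "S1 +>\<^bsub>M\<^esub> l0 \<in> carrier (quot_module R M S1)"
    using a_rcosetsI[OF submod_subset[OF S1s] l0c] by (simp add: quot_simps)
  have key: "S1 +>\<^bsub>M\<^esub> l0 \<in> U" if "submodule U R (quot_module R M S1)" "U \<noteq> {S1}" for U
    using key_quot[OF S1 S2 ne VM l0(1) that] .
  have S1c: "S1 \<in> carrier (quot_module R M S1)"
    using abelian_subgroup.a_subgroup_in_rcosets[OF submod_abelian[OF S1s]] by (simp add: quot_simps)
  have uni: "uniform_module R (quot_module R M S1)"
    unfolding uniform_module_def quot_simps
  proof (intro allI impI)
    fix A B assume h: "submodule A R (quot_module R M S1) \<and> submodule B R (quot_module R M S1) \<and> A \<noteq> {S1} \<and> B \<noteq> {S1}"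
    then have "S1 +>\<^bsub>M\<^esub> l0 \<in> A \<inter> B" using key by blast
    then show "A \<inter> B \<noteq> {S1}" using X0ne by blast
  qed
  have fc: "finitely_cogenerated R (quot_module R M S1)"
    unfolding finitely_cogenerated_def quot_simps(2)
  proof (intro allI impI)
    fix F assume h: "F \<subseteq> submods R (quot_module R M S1) \<and> carrier (quot_module R M S1) \<inter> \<Inter> F = {S1}"
    show "\<exists>F0\<subseteq>F. finite F0 \<and> carrier (quot_module R M S1) \<inter> \<Inter> F0 = {S1}"
    proof (cases "{S1} \<in> F")
      case True
      then show ?thesis using S1c by (intro exI[of _ "{{S1}}"]) auto
    next
      case False
      have "S1 +>\<^bsub>M\<^esub> l0 \<in> U" if "U \<in> F" for U
        using key[of U] that h False by (auto simp: submods_def)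
      then have "S1 +>\<^bsub>M\<^esub> l0 \<in> carrier (quot_module R M S1) \<inter> \<Inter> F" using X0c by blast
      then show ?thesis using h X0ne by blast
    qed
  qed
  show ?thesis using uni fc by simp
qed


lemma uni_common:
  assumes S1: "S1 \<in> MinSub R M" and S2: "S2 \<in> MinSub R M" and ne: "S1 \<noteq> S2"
    and uni: "uniform_module R (quot_module R M S1)"
    and P: "submodule P R M" and p0: "p0 \<in> P" "p0 \<notin> S1"
  shows "\<exists>p\<in>P. \<exists>s\<in>S2. \<exists>t\<in>S1. p = t \<oplus>\<^bsub>M\<^esub> s \<and> s \<noteq> \<zero>\<^bsub>M\<^esub>"
proof -
  have S1s: "submodule S1 R M" using S1 by (auto simp: MinSub_def)
  have S2s: "submodule S2 R M" "S2 \<noteq> {\<zero>\<^bsub>M\<^esub>}" using S2 by (auto simp: MinSub_def)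
  obtain l0 where l0: "l0 \<in> S2" "l0 \<noteq> \<zero>\<^bsub>M\<^esub>" using nz_elem[OF S2s] by blast
  have l0c: "l0 \<in> carrier M" using l0 submod_subset[OF S2s(1)] by blast
  have "l0 \<notin> S1" using min_disj[OF S1 S2 ne] l0 by blast
  then have l0ne: "S1 +>\<^bsub>M\<^esub> l0 \<noteq> S1" using coset_self_iff[OF S1s l0c] by simp
  have p0c: "p0 \<in> carrier M" using p0 submod_subset[OF P] by blast
  have p0ne: "S1 +>\<^bsub>M\<^esub> p0 \<noteq> S1" using coset_self_iff[OF S1s p0c] p0 by simp
  define UP where "UP = (\<lambda>a. S1 +>\<^bsub>M\<^esub> a) ` P"
  define U2 where "U2 = (\<lambda>a. S1 +>\<^bsub>M\<^esub> a) ` S2"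
  have UPs: "submodule UP R (quot_module R M S1)" unfolding UP_def using image_submod[OF S1s P] .
  have U2s: "submodule U2 R (quot_module R M S1)" unfolding U2_def using image_submod[OF S1s S2s(1)] .
  have "S1 +>\<^bsub>M\<^esub> p0 \<in> UP" using p0 unfolding UP_def by blast
  then have UPnz: "UP \<noteq> {S1}" using p0ne by blast
  have "S1 +>\<^bsub>M\<^esub> l0 \<in> U2" using l0 unfolding U2_def by blast
  then have U2nz: "U2 \<noteq> {S1}" using l0ne by blast
  have "UP \<inter> U2 \<noteq> {S1}" using uni UPs U2s UPnz U2nz unfolding uniform_module_def quot_simps by blast
  moreover have "S1 \<in> UP \<inter> U2"
  proof -
    have "S1 +>\<^bsub>M\<^esub> \<zero>\<^bsub>M\<^esub> = S1" using a_coset_add_zero[OF submod_subset[OF S1s]] .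
    then show ?thesis using submod_zero[OF P] submod_zero[OF S2s(1)] unfolding UP_def U2_def by force
  qed
  ultimately obtain X where X: "X \<in> UP" "X \<in> U2" "X \<noteq> S1" by blast
  obtain p where p: "p \<in> P" "X = S1 +>\<^bsub>M\<^esub> p" using X(1) unfolding UP_def by blast
  obtain s where s: "s \<in> S2" "X = S1 +>\<^bsub>M\<^esub> s" using X(2) unfolding U2_def by blast
  have pc: "p \<in> carrier M" using p submod_subset[OF P] by blast
  have sc: "s \<in> carrier M" using s submod_subset[OF S2s(1)] by blast
  have "s \<notin> S1" using coset_self_iff[OF S1s sc] s X(3) by simp
  then have sne: "s \<noteq> \<zero>\<^bsub>M\<^esub>" using submod_zero[OF S1s] by blast
  obtain t where t: "t \<in> S1" "p = t \<oplus>\<^bsub>M\<^esub> s" using coset_eqD[OF S1s pc] p(2) s(2) by metis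
  show ?thesis using p(1) s(1) t sne by blast
qed

lemma half1:
  assumes S1: "S1 \<in> MinSub R M" and S2: "S2 \<in> MinSub R M" and ne: "S1 \<noteq> S2"
    and uni: "uniform_module R (quot_module R M S1)" and cm: "comultiplication_module R M"
    and P: "submodule P R M" "P \<noteq> {\<zero>\<^bsub>M\<^esub>}" and dj1: "P \<inter> S1 = {\<zero>\<^bsub>M\<^esub>}"
  shows "S2 \<subseteq> P"
proof -
  have S1s: "submodule S1 R M" using S1 by (auto simp: MinSub_def)
  have S2s: "submodule S2 R M" using S2 by (auto simp: MinSub_def)
  obtain p0 where p0: "p0 \<in> P" "p0 \<noteq> \<zero>\<^bsub>M\<^esub>" using nz_elem[OF P] by blast
  have "p0 \<notin> S1" using p0 dj1 by blast
  then obtain p s t where pst: "p \<in> P" "s \<in> S2" "t \<in> S1" "p = t \<oplus>\<^bsub>M\<^esub> s" "s \<noteq> \<zero>\<^bsub>M\<^esub>"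
    using uni_common[OF S1 S2 ne uni P(1) p0(1)] by blast
  have dj: "S1 \<inter> S2 = {\<zero>\<^bsub>M\<^esub>}" using min_disj[OF S1 S2 ne] .
  have "t \<in> P" using comult_key[OF cm P(1) S1s S2s dj pst(3) pst(2)] pst(1,4) by simp
  then have t0: "t = \<zero>\<^bsub>M\<^esub>" using dj1 pst(3) by blast
  have sc: "s \<in> carrier M" using pst(2) submod_subset[OF S2s] by blast
  have "p = s" using pst(4) t0 sc by simp
  then have "s \<in> P \<inter> S2" using pst by simp
  then have "P \<inter> S2 \<noteq> {\<zero>\<^bsub>M\<^esub>}" using pst(5) by blast
  then show ?thesis using min_meet[OF S2 P(1)] by simp
qed

lemma half2:
  assumes S1: "S1 \<in> MinSub R M" and S2: "S2 \<in> MinSub R M" and ne: "S1 \<noteq> S2"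
    and uni: "uniform_module R (quot_module R M S1)"
    and V: "submodule V R M" and S1V: "S1 \<subseteq> V" and Vne: "V \<noteq> S1"
  shows "S2 \<subseteq> V"
proof -
  have S1s: "submodule S1 R M" using S1 by (auto simp: MinSub_def)
  have S2s: "submodule S2 R M" using S2 by (auto simp: MinSub_def)
  obtain a where a: "a \<in> V" "a \<notin> S1" using S1V Vne by blast
  then obtain p s t where pst: "p \<in> V" "s \<in> S2" "t \<in> S1" "p = t \<oplus>\<^bsub>M\<^esub> s" "s \<noteq> \<zero>\<^bsub>M\<^esub>"
    using uni_common[OF S1 S2 ne uni V a] by blast
  have sc: "s \<in> carrier M" using pst(2) submod_subset[OF S2s] by blast
  have tc: "t \<in> carrier M" using pst(3) submod_subset[OF S1s] by blast
  have "\<ominus>\<^bsub>M\<^esub> t \<oplus>\<^bsub>M\<^esub> p = s" using pst(4) sc tc by (simp add: a_assoc[symmetric] l_neg)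
  moreover have "\<ominus>\<^bsub>M\<^esub> t \<oplus>\<^bsub>M\<^esub> p \<in> V" using submod_add[OF V submod_neg[OF V] pst(1)] S1V pst(3) by blast
  ultimately have "s \<in> V \<inter> S2" using pst(2) by simp
  then have "V \<inter> S2 \<noteq> {\<zero>\<^bsub>M\<^esub>}" using pst(5) by blast
  then show ?thesis using min_meet[OF S2 V] by simp
qed

lemma meets:
  assumes S1: "S1 \<in> MinSub R M" and S2: "S2 \<in> MinSub R M" and ne: "S1 \<noteq> S2"
    and uni: "uniform_module R (quot_module R M S1)" and cm: "comultiplication_module R M"
    and P: "submodule P R M" "P \<noteq> {\<zero>\<^bsub>M\<^esub>}"
  shows "S1 \<subseteq> P \<or> S2 \<subseteq> P"
proof (cases "P \<inter> S1 = {\<zero>\<^bsub>M\<^esub>}")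
  case True
  then show ?thesis using half1[OF S1 S2 ne uni cm P] by simp
next
  case False
  then show ?thesis using min_meet[OF S1 P(1)] by simp
qed

lemma large12:
  assumes S1: "S1 \<in> MinSub R M" and S2: "S2 \<in> MinSub R M" and ne: "S1 \<noteq> S2"
    and uni: "uniform_module R (quot_module R M S1)" and cm: "comultiplication_module R M"
  shows "large_submodule R M (S1 <+>\<^bsub>M\<^esub> S2)"
proof -
  have S1s: "submodule S1 R M" "S1 \<noteq> {\<zero>\<^bsub>M\<^esub>}" using S1 by (auto simp: MinSub_def)
  have S2s: "submodule S2 R M" "S2 \<noteq> {\<zero>\<^bsub>M\<^esub>}" using S2 by (auto simp: MinSub_def)
  have sub1: "S1 \<subseteq> S1 <+>\<^bsub>M\<^esub> S2" using sum_sup1[OF S1s(1) S2s(1)] .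
  have sub2: "S2 \<subseteq> S1 <+>\<^bsub>M\<^esub> S2" using sum_sup1[OF S2s(1) S1s(1)] sum_comm[OF S1s(1) S2s(1)] by simp
  have "(S1 <+>\<^bsub>M\<^esub> S2) \<inter> L \<noteq> {\<zero>\<^bsub>M\<^esub>}" if L: "submodule L R M" "L \<noteq> {\<zero>\<^bsub>M\<^esub>}" for L
  proof
    assume h: "(S1 <+>\<^bsub>M\<^esub> S2) \<inter> L = {\<zero>\<^bsub>M\<^esub>}"
    have "S1 \<subseteq> L \<or> S2 \<subseteq> L" using meets[OF S1 S2 ne uni cm L] .
    then show False
    proof
      assume "S1 \<subseteq> L" then have "S1 \<subseteq> {\<zero>\<^bsub>M\<^esub>}" using h sub1 by blast
      then show False using S1s(2) submod_zero[OF S1s(1)] by blast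
    next
      assume "S2 \<subseteq> L" then have "S2 \<subseteq> {\<zero>\<^bsub>M\<^esub>}" using h sub2 by blast
      then show False using S2s(2) submod_zero[OF S2s(1)] by blast
    qed
  qed
  then show ?thesis using sum_submod[OF S1s(1) S2s(1)] unfolding large_submodule_def by simp
qed

lemma vertex_in:
  assumes S1: "S1 \<in> MinSub R M" and S2: "S2 \<in> MinSub R M" and ne: "S1 \<noteq> S2"
    and uni1: "uniform_module R (quot_module R M S1)" and uni2: "uniform_module R (quot_module R M S2)"
    and cm: "comultiplication_module R M"
    and V: "V \<in> LSG_vertices R M"
  shows "V = S1 \<or> V = S2"
proof -
  have Vs: "submodule V R M" "V \<noteq> {\<zero>\<^bsub>M\<^esub>}" "\<not> large_submodule R M V" using V by (auto simp: LSG_vertices_def)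
  have S1s: "submodule S1 R M" using S1 by (auto simp: MinSub_def)
  have S2s: "submodule S2 R M" using S2 by (auto simp: MinSub_def)
  have L: "large_submodule R M (S1 <+>\<^bsub>M\<^esub> S2)" using large12[OF S1 S2 ne uni1 cm] .
  show ?thesis
  proof (rule ccontr)
    assume nv: "\<not> (V = S1 \<or> V = S2)"
    have "S1 \<subseteq> V \<or> S2 \<subseteq> V" using meets[OF S1 S2 ne uni1 cm Vs(1,2)] .
    then have "S1 \<subseteq> V \<and> S2 \<subseteq> V"
    proof
      assume a: "S1 \<subseteq> V" then show ?thesis using half2[OF S1 S2 ne uni1 Vs(1) a] nv by blast
    next
      assume a: "S2 \<subseteq> V" then show ?thesis using half2[OF S2 S1 ne[symmetric] uni2 Vs(1) a] nv by blast
    qed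
    then have "S1 <+>\<^bsub>M\<^esub> S2 \<subseteq> V" using sum_le[OF Vs(1)] by blast
    then show False using large_mono[OF L Vs(1)] Vs(3) by blast
  qed
qed

lemma if_dir:
  assumes cm: "comultiplication_module R M" and MS: "MinSub R M = {S1, S2}" and ne: "S1 \<noteq> S2"
    and uni1: "uniform_module R (quot_module R M S1)" and uni2: "uniform_module R (quot_module R M S2)"
  shows "LSG_empty R M"
  unfolding LSG_empty_def
proof (intro allI notI)
  fix N K assume adj: "LSG_adj R M N K"
  have S1: "S1 \<in> MinSub R M" and S2: "S2 \<in> MinSub R M" using MS by auto
  have S1s: "submodule S1 R M" using S1 by (auto simp: MinSub_def)
  have S2s: "submodule S2 R M" using S2 by (auto simp: MinSub_def)
  have NK: "N \<in> LSG_vertices R M" "K \<in> LSG_vertices R M" "N \<noteq> K" "\<not> large_submodule R M (N <+>\<^bsub>M\<^esub> K)"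
    using adj by (auto simp: LSG_adj_def)
  have "N = S1 \<or> N = S2" "K = S1 \<or> K = S2" using vertex_in[OF S1 S2 ne uni1 uni2 cm] NK by auto
  then have "N <+>\<^bsub>M\<^esub> K = S1 <+>\<^bsub>M\<^esub> S2" using NK(3) sum_comm[OF S1s S2s] by auto
  then show False using NK(4) large12[OF S1 S2 ne uni1 cm] by simp
qed

lemma onlyif_dir:
  assumes cm: "comultiplication_module R M" and nn: "LSG_nonnull R M" and E: "LSG_empty R M"
  shows "\<exists>S1 S2. MinSub R M = {S1, S2} \<and> S1 \<noteq> S2 \<and>
       finitely_cogenerated R (quot_module R M S1) \<and> uniform_module R (quot_module R M S1) \<and>
       finitely_cogenerated R (quot_module R M S2) \<and> uniform_module R (quot_module R M S2)"
proof -
  obtain V where V: "V \<in> LSG_vertices R M" using nn by (auto simp: LSG_nonnull_def)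
  have Vs: "submodule V R M" "V \<noteq> {\<zero>\<^bsub>M\<^esub>}" "\<not> large_submodule R M V" using V by (auto simp: LSG_vertices_def)
  obtain L where L: "submodule L R M" "L \<noteq> {\<zero>\<^bsub>M\<^esub>}" "V \<inter> L = {\<zero>\<^bsub>M\<^esub>}"
    using Vs unfolding large_submodule_def by blast
  have "\<not> large_submodule R M L" using Vs(1,2) L(3) unfolding large_submodule_def by (auto simp: Int_commute)
  then have Lv: "L \<in> LSG_vertices R M" using L by (simp add: LSG_vertices_def)
  have VL: "V \<noteq> L" using L Vs(2) by auto
  have VM: "\<forall>W\<in>LSG_vertices R M. W \<in> MinSub R M" using vertex_min[OF E] by blast
  have Vm: "V \<in> MinSub R M" and Lm: "L \<in> MinSub R M" using VM V Lv by auto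
  have Lg: "large_submodule R M (V <+>\<^bsub>M\<^esub> L)"
    using E V Lv VL by (auto simp: LSG_empty_def LSG_adj_def)
  have MS: "MinSub R M = {V, L}"
  proof
    show "{V, L} \<subseteq> MinSub R M" using Vm Lm by simp
    show "MinSub R M \<subseteq> {V, L}"
    proof
      fix S assume S: "S \<in> MinSub R M"
      show "S \<in> {V, L}"
      proof (rule ccontr)
        assume nS: "S \<notin> {V, L}"
        have Ss: "submodule S R M" "S \<noteq> {\<zero>\<^bsub>M\<^esub>}" using S by (auto simp: MinSub_def)
        have dV: "S \<inter> V = {\<zero>\<^bsub>M\<^esub>}" using min_disj[OF S Vm] nS by auto
        have dL: "S \<inter> L = {\<zero>\<^bsub>M\<^esub>}" using min_disj[OF S Lm] nS by auto
        have dVL: "V \<inter> L = {\<zero>\<^bsub>M\<^esub>}" using L(3) .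
        have "(V <+>\<^bsub>M\<^esub> L) \<inter> S \<noteq> {\<zero>\<^bsub>M\<^esub>}" using Lg Ss unfolding large_submodule_def by blast
        moreover have "\<zero>\<^bsub>M\<^esub> \<in> (V <+>\<^bsub>M\<^esub> L) \<inter> S"
          using submod_zero[OF sum_submod[OF Vs(1) L(1)]] submod_zero[OF Ss(1)] by blast
        ultimately obtain x where x: "x \<in> V <+>\<^bsub>M\<^esub> L" "x \<in> S" "x \<noteq> \<zero>\<^bsub>M\<^esub>" by blast
        then obtain v l where vl: "v \<in> V" "l \<in> L" "x = v \<oplus>\<^bsub>M\<^esub> l" unfolding set_add_def' by blast
        have vc: "v \<in> carrier M" using vl submod_subset[OF Vs(1)] by blast
        have lc: "l \<in> carrier M" using vl submod_subset[OF L(1)] by blast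
        have "v \<in> S" using comult_key[OF cm Ss(1) Vs(1) L(1) dVL vl(1) vl(2)] x vl by simp
        then have v0: "v = \<zero>\<^bsub>M\<^esub>" using dV vl(1) by blast
        have dLV: "L \<inter> V = {\<zero>\<^bsub>M\<^esub>}" using dVL by blast
        have "l \<oplus>\<^bsub>M\<^esub> v \<in> S" using x vl vc lc a_comm by metis
        then have "l \<in> S" using comult_key[OF cm Ss(1) L(1) Vs(1) dLV vl(2) vl(1)] by simp
        then have l0: "l = \<zero>\<^bsub>M\<^esub>" using dL vl(2) by blast
        have "x = \<zero>\<^bsub>M\<^esub>" using vl(3) v0 l0 by simp
        then show False using x(3) by simp
      qed
    qed
  qed
  show ?thesis
    using MS VL quot_good[OF Vm Lm VL VM] quot_good[OF Lm Vm VL[symmetric] VM] by blast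
qed

end

theorem theorem2p5:
  fixes R :: "'a ring" and M :: "('a, 'b) module"
  assumes "module R M"
    and "carrier M \<noteq> {\<zero>\<^bsub>M\<^esub>}"
    and "comultiplication_module R M"
    and "LSG_nonnull R M"
  shows "LSG_empty R M \<longleftrightarrow>
    (\<exists>S1 S2. MinSub R M = {S1, S2} \<and> S1 \<noteq> S2 \<and>
       finitely_cogenerated R (quot_module R M S1) \<and> uniform_module R (quot_module R M S1) \<and>
       finitely_cogenerated R (quot_module R M S2) \<and> uniform_module R (quot_module R M S2))"
proof -
  interpret module R M by (rule assms(1))
  show ?thesis
  proof
    assume "LSG_empty R M"
    then show "\<exists>S1 S2. MinSub R M = {S1, S2} \<and> S1 \<noteq> S2 \<and>
       finitely_cogenerated R (quot_module R M S1) \<and> uniform_module R (quot_module R M S1) \<and>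
       finitely_cogenerated R (quot_module R M S2) \<and> uniform_module R (quot_module R M S2)"
      using onlyif_dir[OF assms(3) assms(4)] by blast
  next
    assume "\<exists>S1 S2. MinSub R M = {S1, S2} \<and> S1 \<noteq> S2 \<and>
       finitely_cogenerated R (quot_module R M S1) \<and> uniform_module R (quot_module R M S1) \<and>
       finitely_cogenerated R (quot_module R M S2) \<and> uniform_module R (quot_module R M S2)"
    then obtain S1 S2 where h: "MinSub R M = {S1, S2}" "S1 \<noteq> S2"
      "uniform_module R (quot_module R M S1)" "uniform_module R (quot_module R M S2)" by blast
    show "LSG_empty R M" using if_dir[OF assms(3) h] .
  qed
qed

end
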